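(* Let $C$ be a $k$-context of the call-by-value $\lambda$-calculus and let $c_1,c_2\in\mathcal{T}(C)$ (so $c_1,c_2$ are resource $k$-contexts). Let $\tilde c_1$ be a rigid of $c_1$ and $\tilde c_2$ a rigid of $c_2$. For $i=1,\dots,k$ let $\vec v^{\,i}=\langle v^i_1,\dots,v^i_{\deg_{\Box_i}(c_1)}\rangle$ and $\vec u^{\,i}=\langle u^i_1,\dots,u^i_{\deg_{\Box_i}(c_2)}\rangle$ be lists of resource values. If $\tilde c_1[\vec v^{\,1},\dots,\vec v^{\,k}]=\tilde c_2[\vec u^{\,1},\dots,\vec u^{\,k}]$, then $c_1=c_2$ and $[\vec v^{\,i}]=[\vec u^{\,i}]$ for every $i=1,\dots,k$, where $[\vec w]$ denotes the finite multiset of the elements of the list $\vec w$.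
   Context: CbV $\lambda$-terms are ordinary $\lambda$-terms $M::=x\mid \lambda x.M\mid MM$; values are variables and abstractions. A $k$-context $C$ is a $\lambda$-term possibly containing holes $\Box_1,\dots,\Box_k$ (each any number of times); $C[M_1,\dots,M_k]$ denotes filling $\Box_i$ with $M_i$ (variable capture allowed). Resource CbV terms: resource values $v::=x\mid \lambda x.s$ and resource simple terms $s::= s_1s_2\mid [v_1,\dots,v_n]$ ($n\ge 0$, brackets denote finite multisets, "bags"), taken up to $\alpha$-equivalence. Resource $k$-contexts are defined the same way but additionally allowing $\Box_1,\dots,\Box_k$ as value-contexts: $c^v::=\Box_1\mid\dots\mid\Box_k\mid x\mid \lambda x.c^s$, $c^s::=c^s_1c^s_2\mid[c^v_1,\dots,c^v_n]$. $\deg_{\Box_i}(c)$ is the number of occurrences of $\Box_i$ in $c$. Taylor expansion $\mathcal{T}$ (sets of resource simple terms/contexts): $\mathcal{T}(x)=\{[x,\dots,x]\ (n \text{ copies})\mid n\in\mathbb N\}$, $\mathcal{T}(\Box_i)=\{[\Box_i,\dots,\Box_i]\ (n\text{ copies})\mid n\in\mathbb N\}$, $\mathcal{T}(\lambda x.M)=\{[\lambda x.s_1,\dots,\lambda x.s_n]\mid n\in\mathbb N,\ s_j\in\mathcal{T}(M)\}$, $\mathcal{T}(M_1M_2)=\{s_1s_2\mid s_j\in\mathcal{T}(M_j)\}$. Rigid contexts are built like resource contexts but with ordered lists $\langle\cdot,\dots,\cdot\rangle$ in place of bags. The rigids of a resource context $c$: $\mathrm{Rigid}(\Box_i)=\{\Box_i\}$,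 $\mathrm{Rigid}(x)=\{x\}$, $\mathrm{Rigid}(\lambda x.c_0)=\{\lambda x.\tilde c_0\mid\tilde c_0\in\mathrm{Rigid}(c_0)\}$, $\mathrm{Rigid}(c_0c_1)=\{\tilde c_0\tilde c_1\mid \tilde c_j\in\mathrm{Rigid}(c_j)\}$, $\mathrm{Rigid}([c_1,\dots,c_n])=\{\langle\tilde c_{\sigma(1)},\dots,\tilde c_{\sigma(n)}\rangle\mid\sigma\text{ a permutation},\ \tilde c_j\in\mathrm{Rigid}(c_j)\}$. Filling a rigid $\tilde c$ of $c$ with lists $\vec v^{\,i}$ of resource values of length $\deg_{\Box_i}(c)$, producing a resource term $\tilde c[\vec v^{\,1},\dots,\vec v^{\,k}]$: for $\tilde c=\Box_i$, the result is the unique value in $\vec v^{\,i}$ (others lists empty); for $x$ it is $x$; $(\lambda x.\tilde c_0)[\vec v^{\,1},\dots,\vec v^{\,k}]=\lambda x.\tilde c_0[\vec v^{\,1},\dots,\vec v^{\,k}]$; for $\tilde c_1\tilde c_2$, split each $\vec v^{\,i}=\vec w^{\,i1}\vec w^{\,i2}$ (concatenation) with $\vec w^{\,ij}$ of length $\deg_{\Box_i}(c_j)$, and the result is $\tilde c_1[\vec w^{\,11},\dots,\vec w^{\,k1}]\,\tilde c_2[\vec w^{\,12},\dots,\vec w^{\,k2}]$; for $\langle\tilde c_{\sigma(1)},\dots,\tilde c_{\sigma(n)}\rangle$, split each $\vec v^{\,i}=\vec w^{\,i1}\cdots\vec w^{\,in}$ with $\vec w^{\,ij}$ of length $\deg_{\Box_i}(c_{\sigma(j)})$,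 and the result is the bag $[\tilde c_{\sigma(1)}[\vec w^{\,11},\dots,\vec w^{\,k1}],\dots,\tilde c_{\sigma(n)}[\vec w^{\,1n},\dots,\vec w^{\,kn}]]$. *)

theory Defs
  imports Main "HOL-Library.Multiset"
begin

text \<open>Terms are represented with de Bruijn indices (so terms are taken up to
alpha-equivalence); filling of holes is literal plugging (capture allowed).
Hole \<open>Box_(i+1)\<close> of the paper is represented by index \<open>i\<close>.\<close>

datatype lctx = LVar nat | LHole nat | LLam lctx | LApp lctx lctx

fun lholes :: "lctx \<Rightarrow> nat set" where
  "lholes (LVar x) = {}"
| "lholes (LHole i) = {i}"
| "lholes (LLam M) = lholes M"
| "lholes (LApp M N) = lholes M \<union> lholes N"

section \<open>Resource contexts (resource terms = resource contexts without holes)\<close>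

datatype rval = RVar nat | RHole nat | RLam rsim
     and rsim = RApp rsim rsim | RBag "rval multiset"

inductive rv_hole_free :: "rval \<Rightarrow> bool" and rs_hole_free :: "rsim \<Rightarrow> bool" where
  "rv_hole_free (RVar x)"
| "rs_hole_free s \<Longrightarrow> rv_hole_free (RLam s)"
| "rs_hole_free s \<Longrightarrow> rs_hole_free t \<Longrightarrow> rs_hole_free (RApp s t)"
| "(\<forall>v\<in>#b. rv_hole_free v) \<Longrightarrow> rs_hole_free (RBag b)"

abbreviation resource_value :: "rval \<Rightarrow> bool" where
  "resource_value v \<equiv> rv_hole_free v"

inductive rv_deg :: "nat \<Rightarrow> rval \<Rightarrow> nat \<Rightarrow> bool" and rs_deg :: "nat \<Rightarrow> rsim \<Rightarrow> nat \<Rightarrow> bool" where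
  "rv_deg i (RVar x) 0"
| "rv_deg i (RHole j) (if i = j then 1 else 0)"
| "rs_deg i s n \<Longrightarrow> rv_deg i (RLam s) n"
| "rs_deg i s n \<Longrightarrow> rs_deg i t m \<Longrightarrow> rs_deg i (RApp s t) (n + m)"
| "list_all2 (rv_deg i) vs ns \<Longrightarrow> rs_deg i (RBag (mset vs)) (sum_list ns)"

definition deg :: "nat \<Rightarrow> rsim \<Rightarrow> nat" where
  "deg i c = (THE n. rs_deg i c n)"

fun taylor :: "lctx \<Rightarrow> rsim set" where
  "taylor (LVar x) = {RBag (replicate_mset n (RVar x)) | n. True}"
| "taylor (LHole i) = {RBag (replicate_mset n (RHole i)) | n. True}"
| "taylor (LLam M) = {RBag (mset (map RLam ss)) | ss. set ss \<subseteq> taylor M}"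
| "taylor (LApp M N) = {RApp s t | s t. s \<in> taylor M \<and> t \<in> taylor N}"

datatype gval = GVar nat | GHole nat | GLam gsim
     and gsim = GApp gsim gsim | GList "gval list"

inductive rigid_v :: "gval \<Rightarrow> rval \<Rightarrow> bool" and rigid_s :: "gsim \<Rightarrow> rsim \<Rightarrow> bool" where
  "rigid_v (GVar x) (RVar x)"
| "rigid_v (GHole i) (RHole i)"
| "rigid_s g c \<Longrightarrow> rigid_v (GLam g) (RLam c)"
| "rigid_s g1 c1 \<Longrightarrow> rigid_s g2 c2 \<Longrightarrow> rigid_s (GApp g1 g2) (RApp c1 c2)"
| "list_all2 rigid_v gs cs \<Longrightarrow> rigid_s (GList gs) (RBag (mset cs))"

text \<open>Degrees of rigids (they coincide with the degrees of the underlying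
resource context and are used to split the lists when filling).\<close>

fun gv_deg :: "nat \<Rightarrow> gval \<Rightarrow> nat" and gs_deg :: "nat \<Rightarrow> gsim \<Rightarrow> nat" where
  "gv_deg i (GVar x) = 0"
| "gv_deg i (GHole j) = (if i = j then 1 else 0)"
| "gv_deg i (GLam g) = gs_deg i g"
| "gs_deg i (GApp g1 g2) = gs_deg i g1 + gs_deg i g2"
| "gs_deg i (GList gs) = sum_list (map (gv_deg i) gs)"

definition take_all :: "(nat \<Rightarrow> nat) \<Rightarrow> rval list list \<Rightarrow> rval list list" where
  "take_all d vs = map (\<lambda>i. take (d i) (vs ! i)) [0..<length vs]"

definition drop_all :: "(nat \<Rightarrow> nat) \<Rightarrow> rval list list \<Rightarrow> rval list list" where
  "drop_all d vs = map (\<lambda>i. drop (d i) (vs ! i)) [0..<length vs]"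

text \<open>Filling a rigid with lists of resource values; \<open>vs ! i\<close> is the list for hole i.\<close>
fun fill_v :: "gval \<Rightarrow> rval list list \<Rightarrow> rval"
and fill_s :: "gsim \<Rightarrow> rval list list \<Rightarrow> rsim"
and fill_l :: "gval list \<Rightarrow> rval list list \<Rightarrow> rval list" where
  "fill_v (GVar x) vs = RVar x"
| "fill_v (GHole i) vs = hd (vs ! i)"
| "fill_v (GLam g) vs = RLam (fill_s g vs)"
| "fill_s (GApp g1 g2) vs =
     RApp (fill_s g1 (take_all (\<lambda>i. gs_deg i g1) vs)) (fill_s g2 (drop_all (\<lambda>i. gs_deg i g1) vs))"
| "fill_s (GList gs) vs = RBag (mset (fill_l gs vs))"
| "fill_l [] vs = []"
| "fill_l (g # gs) vs =
     fill_v g (take_all (\<lambda>i. gv_deg i g) vs) # fill_l gs (drop_all (\<lambda>i. gv_deg i g) vs)"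

end

theory Submission
  imports Defs
begin

primrec ur_v :: "gval \<Rightarrow> rval" and ur_s :: "gsim \<Rightarrow> rsim" where
  "ur_v (GVar x) = RVar x"
| "ur_v (GHole i) = RHole i"
| "ur_v (GLam g) = RLam (ur_s g)"
| "ur_s (GApp a b) = RApp (ur_s a) (ur_s b)"
| "ur_s (GList gs) = RBag (mset (map ur_v gs))"

primrec d_v :: "nat \<Rightarrow> rval \<Rightarrow> nat" and d_s :: "nat \<Rightarrow> rsim \<Rightarrow> nat" where
  "d_v i (RVar x) = 0"
| "d_v i (RHole j) = (if i = j then 1 else 0)"
| "d_v i (RLam s) = d_s i s"
| "d_s i (RApp a b) = d_s i a + d_s i b"
| "d_s i (RBag b) = sum_mset (image_mset (d_v i) b)"

lemma rigid_ur:
  "rigid_v g c \<Longrightarrow> c = ur_v g" "rigid_s h s \<Longrightarrow> s = ur_s h"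
proof (induction rule: rigid_v_rigid_s.inducts)
  case (5 gs cs)
  have "cs = map ur_v gs" using 5 by (induct rule: list_all2_induct) auto
  then show ?case by simp
qed auto

lemma rigid_deg:
  "rigid_v g c \<Longrightarrow> rv_deg i c (gv_deg i g)" "rigid_s h s \<Longrightarrow> rs_deg i s (gs_deg i h)"
proof (induction rule: rigid_v_rigid_s.inducts)
  case (5 gs cs)
  have "list_all2 (rv_deg i) cs (map (gv_deg i) gs)" using 5
    by (induct rule: list_all2_induct) auto
  then show ?case using rv_deg_rs_deg.intros(5) by fastforce
next
  case (2 j)
  have "rv_deg i (RHole j) (if i = j then 1 else 0)" by (rule rv_deg_rs_deg.intros(2))
  then show ?case by simp
qed (auto intro: rv_deg_rs_deg.intros)

lemma deg_unique:
  "rv_deg i c n \<Longrightarrow> n = d_v i c" "rs_deg i s m \<Longrightarrow> m = d_s i s"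
proof (induction rule: rv_deg_rs_deg.inducts)
  case (5 i vs ns)
  have "ns = map (d_v i) vs" using 5 by (induct rule: list_all2_induct) auto
  then show ?case by (metis d_s.simps(2) mset_map sum_mset_sum_list)
qed auto

lemma deg_eq: "rigid_s g c \<Longrightarrow> deg i c = gs_deg i g"
  unfolding deg_def
  by (rule the_equality) (auto intro: rigid_deg dest: deg_unique, metis rigid_deg(2) deg_unique(2))

fun splits :: "gval list \<Rightarrow> rval list list \<Rightarrow> rval list list list" where
  "splits [] vs = []"
| "splits (g#gs) vs = take_all (\<lambda>i. gv_deg i g) vs # splits gs (drop_all (\<lambda>i. gv_deg i g) vs)"

lemma fill_l_splits: "fill_l gs vs = map (case_prod fill_v) (zip gs (splits gs vs))"
  by (induction gs arbitrary: vs) auto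

lemma length_splits: "length (splits gs vs) = length gs"
  by (induction gs arbitrary: vs) auto

lemma take_all_len[simp]: "length (take_all d vs) = length vs"
  by (simp add: take_all_def)
lemma drop_all_len[simp]: "length (drop_all d vs) = length vs"
  by (simp add: drop_all_def)
lemma take_all_nth[simp]: "i < length vs \<Longrightarrow> take_all d vs ! i = take (d i) (vs ! i)"
  by (simp add: take_all_def)
lemma drop_all_nth[simp]: "i < length vs \<Longrightarrow> drop_all d vs ! i = drop (d i) (vs ! i)"
  by (simp add: drop_all_def)

lemma splits_elem:
  "(g, w) \<in> set (zip gs (splits gs vs)) \<Longrightarrow>
   \<forall>i<length vs. length (vs ! i) = sum_list (map (gv_deg i) gs) \<Longrightarrow>
   g \<in> set gs \<and> length w = length vs \<and> (\<forall>i<length vs. length (w ! i) = gv_deg i g)"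
proof (induction gs arbitrary: vs)
  case Nil then show ?case by simp
next
  case (Cons a gs)
  show ?case
  proof (cases "(g, w) = (a, take_all (\<lambda>i. gv_deg i a) vs)")
    case True
    then show ?thesis using Cons.prems(2) by auto
  next
    case False
    then have "(g, w) \<in> set (zip gs (splits gs (drop_all (\<lambda>i. gv_deg i a) vs)))"
      using Cons.prems(1) by auto
    moreover have "\<forall>i<length (drop_all (\<lambda>i. gv_deg i a) vs).
      length (drop_all (\<lambda>i. gv_deg i a) vs ! i) = sum_list (map (gv_deg i) gs)"
      using Cons.prems(2) by auto
    ultimately show ?thesis using Cons.IH by fastforce
  qed
qed

lemma splits_mset:
  "i < length vs \<Longrightarrow> length (vs ! i) = sum_list (map (gv_deg i) gs) \<Longrightarrow>
   mset (vs ! i) = sum_list (map (\<lambda>(g, w). mset (w ! i)) (zip gs (splits gs vs)))"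
proof (induction gs arbitrary: vs)
  case Nil then show ?case by simp
next
  case (Cons a gs)
  have "mset (vs ! i) = mset (take (gv_deg i a) (vs ! i)) + mset (drop (gv_deg i a) (vs ! i))"
    by (metis append_take_drop_id mset_append)
  moreover have "mset (drop_all (\<lambda>i. gv_deg i a) vs ! i) =
     sum_list (map (\<lambda>(g, w). mset (w ! i)) (zip gs (splits gs (drop_all (\<lambda>i. gv_deg i a) vs))))"
    using Cons.prems by (intro Cons.IH) auto
  ultimately show ?case using Cons.prems by simp
qed

lemma mset_map_transfer:
  "mset (map F xs) = mset (map F ys) \<Longrightarrow> (\<forall>x\<in>set xs. \<forall>y\<in>set ys. F x = F y \<longrightarrow> P x = P y)
   \<Longrightarrow> mset (map P xs) = mset (map P ys)"
proof (induction xs arbitrary: ys)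
  case Nil then show ?case by simp
next
  case (Cons x xs)
  have "F x \<in># mset (map F ys)" using Cons.prems(1) by (metis list.set_intros(1) list.simps(9) set_mset_mset)
  then obtain y where y: "y \<in> set ys" "F y = F x" by auto
  let ?ys = "remove1 y ys"
  have my: "mset ys = add_mset y (mset ?ys)" using y(1) by simp
  have mys: "mset (map F ys) = add_mset (F y) (mset (map F ?ys))"
    "mset (map P ys) = add_mset (P y) (mset (map P ?ys))"
    using my by (metis mset_map image_mset_add_mset)+
  have "mset (map F xs) = mset (map F ?ys)" using Cons.prems(1) mys(1) y(2) by simp
  moreover have "set ?ys \<subseteq> set ys" by (rule set_remove1_subset)
  ultimately have "mset (map P xs) = mset (map P ?ys)"
    using Cons.prems(2) by (intro Cons.IH) auto
  moreover have "P x = P y" using Cons.prems(2) y by auto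
  ultimately show ?case using mys(2) by simp
qed

lemma bag_case:
  assumes eq: "fill_s (GList gs1) vs = fill_s (GList gs2) us"
    and lv: "length vs = k" and lu: "length us = k"
    and dv: "\<forall>i<k. length (vs ! i) = gs_deg i (GList gs1)"
    and du: "\<forall>i<k. length (us ! i) = gs_deg i (GList gs2)"
    and H: "\<forall>g\<in>set gs1. \<forall>g'\<in>set gs2. \<forall>w w'. length w = k \<longrightarrow> length w' = k \<longrightarrow>
       (\<forall>i<k. length (w ! i) = gv_deg i g) \<longrightarrow> (\<forall>i<k. length (w' ! i) = gv_deg i g') \<longrightarrow>
       fill_v g w = fill_v g' w' \<longrightarrow> ur_v g = ur_v g' \<and> (\<forall>i<k. mset (w ! i) = mset (w' ! i))"
  shows "ur_s (GList gs1) = ur_s (GList gs2) \<and> (\<forall>i<k. mset (vs ! i) = mset (us ! i))"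
proof -
  let ?xs = "zip gs1 (splits gs1 vs)" and ?ys = "zip gs2 (splits gs2 us)"
  have F: "mset (map (case_prod fill_v) ?xs) = mset (map (case_prod fill_v) ?ys)"
    using eq by (simp add: fill_l_splits)
  have ex: "g \<in> set gs1 \<and> length w = k \<and> (\<forall>i<k. length (w ! i) = gv_deg i g)"
    if "(g, w) \<in> set ?xs" for g w using splits_elem[OF that] dv lv by auto
  have ey: "g \<in> set gs2 \<and> length w = k \<and> (\<forall>i<k. length (w ! i) = gv_deg i g)"
    if "(g, w) \<in> set ?ys" for g w using splits_elem[OF that] du lu by auto
  have good: "\<forall>x\<in>set ?xs. \<forall>y\<in>set ?ys. case_prod fill_v x = case_prod fill_v y \<longrightarrow>
      ur_v (fst x) = ur_v (fst y) \<and> (\<forall>i<k. mset (snd x ! i) = mset (snd y ! i))"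
  proof (intro ballI impI)
    fix x y assume x: "x \<in> set ?xs" and y: "y \<in> set ?ys" and e: "case_prod fill_v x = case_prod fill_v y"
    obtain g w where gw: "x = (g, w)" by (cases x)
    obtain g' w' where gw': "y = (g', w')" by (cases y)
    show "ur_v (fst x) = ur_v (fst y) \<and> (\<forall>i<k. mset (snd x ! i) = mset (snd y ! i))"
      using H ex[of g w] ey[of g' w'] x y e gw gw' by auto
  qed
  have "mset (map (ur_v \<circ> fst) ?xs) = mset (map (ur_v \<circ> fst) ?ys)"
    by (rule mset_map_transfer[OF F]) (use good in auto)
  then have "mset (map ur_v gs1) = mset (map ur_v gs2)"
    by (simp add: length_splits flip: map_map)
  moreover have "mset (vs ! i) = mset (us ! i)" if i: "i < k" for i
  proof -
    have "mset (map (\<lambda>(g, w). mset (w ! i)) ?xs) = mset (map (\<lambda>(g, w). mset (w ! i)) ?ys)"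
      by (rule mset_map_transfer[OF F]) (use good i in auto)
    then have "sum_list (map (\<lambda>(g, w). mset (w ! i)) ?xs) = sum_list (map (\<lambda>(g, w). mset (w ! i)) ?ys)"
      by (metis sum_mset_sum_list)
    moreover have "mset (vs ! i) = sum_list (map (\<lambda>(g, w). mset (w ! i)) ?xs)"
      using i lv dv by (intro splits_mset) auto
    moreover have "mset (us ! i) = sum_list (map (\<lambda>(g, w). mset (w ! i)) ?ys)"
      using i lu du by (intro splits_mset) auto
    ultimately show ?thesis by simp
  qed
  ultimately show ?thesis by simp
qed

lemma ur_s_bag: "ur_s g = RBag b \<Longrightarrow> \<exists>gs. g = GList gs \<and> b = mset (map ur_v gs)"
  by (cases g) auto

lemma main:
  "ur_s g1 \<in> taylor C \<Longrightarrow> ur_s g2 \<in> taylor C \<Longrightarrow> length vs = k \<Longrightarrow> length us = k \<Longrightarrow>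
   \<forall>i<k. length (vs ! i) = gs_deg i g1 \<Longrightarrow> \<forall>i<k. length (us ! i) = gs_deg i g2 \<Longrightarrow>
   fill_s g1 vs = fill_s g2 us \<Longrightarrow> ur_s g1 = ur_s g2 \<and> (\<forall>i<k. mset (vs ! i) = mset (us ! i))"
proof (induction C arbitrary: g1 g2 vs us)
  case (LVar x)
  obtain n1 where "ur_s g1 = RBag (replicate_mset n1 (RVar x))" using LVar.prems(1) by auto
  then obtain gs1 where g1: "g1 = GList gs1" "mset (map ur_v gs1) = replicate_mset n1 (RVar x)"
    using ur_s_bag by metis
  obtain n2 where "ur_s g2 = RBag (replicate_mset n2 (RVar x))" using LVar.prems(2) by auto
  then obtain gs2 where g2: "g2 = GList gs2" "mset (map ur_v gs2) = replicate_mset n2 (RVar x)"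
    using ur_s_bag by metis
  have s1: "g = GVar x" if "g \<in> set gs1" for g
  proof -
    have "ur_v g \<in># mset (map ur_v gs1)" using that by simp
    then have "ur_v g \<in># replicate_mset n1 (RVar x)" unfolding g1(2) .
    then have "ur_v g = RVar x" by (simp split: if_splits)
    then show ?thesis by (cases g) auto
  qed
  have s2: "g = GVar x" if "g \<in> set gs2" for g
  proof -
    have "ur_v g \<in># mset (map ur_v gs2)" using that by simp
    then have "ur_v g \<in># replicate_mset n2 (RVar x)" unfolding g2(2) .
    then have "ur_v g = RVar x" by (simp split: if_splits)
    then show ?thesis by (cases g) auto
  qed
  show ?case unfolding g1(1) g2(1)
  proof (rule bag_case[where k=k])
    show "\<forall>g\<in>set gs1. \<forall>g'\<in>set gs2. \<forall>w w'. length w = k \<longrightarrow> length w' = k \<longrightarrow>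
       (\<forall>i<k. length (w ! i) = gv_deg i g) \<longrightarrow> (\<forall>i<k. length (w' ! i) = gv_deg i g') \<longrightarrow>
       fill_v g w = fill_v g' w' \<longrightarrow> ur_v g = ur_v g' \<and> (\<forall>i<k. mset (w ! i) = mset (w' ! i))"
    proof (intro ballI allI impI)
      fix g g' w w' assume a: "g \<in> set gs1" "g' \<in> set gs2" "length w = k" "length w' = k"
        "\<forall>i<k. length (w ! i) = gv_deg i g" "\<forall>i<k. length (w' ! i) = gv_deg i g'"
        "fill_v g w = fill_v g' w'"
      have "g = GVar x" "g' = GVar x" using s1 s2 a by auto
      then show "ur_v g = ur_v g' \<and> (\<forall>i<k. mset (w ! i) = mset (w' ! i))" using a by auto
    qed
  qed (use LVar.prems[unfolded g1(1) g2(1)] in auto)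
next
  case (LHole j)
  obtain n1 where "ur_s g1 = RBag (replicate_mset n1 (RHole j))" using LHole.prems(1) by auto
  then obtain gs1 where g1: "g1 = GList gs1" "mset (map ur_v gs1) = replicate_mset n1 (RHole j)"
    using ur_s_bag by metis
  obtain n2 where "ur_s g2 = RBag (replicate_mset n2 (RHole j))" using LHole.prems(2) by auto
  then obtain gs2 where g2: "g2 = GList gs2" "mset (map ur_v gs2) = replicate_mset n2 (RHole j)"
    using ur_s_bag by metis
  have s1: "g = GHole j" if "g \<in> set gs1" for g
  proof -
    have "ur_v g \<in># mset (map ur_v gs1)" using that by simp
    then have "ur_v g \<in># replicate_mset n1 (RHole j)" unfolding g1(2) .
    then have "ur_v g = RHole j" by (simp split: if_splits)
    then show ?thesis by (cases g) auto
  qed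
  have s2: "g = GHole j" if "g \<in> set gs2" for g
  proof -
    have "ur_v g \<in># mset (map ur_v gs2)" using that by simp
    then have "ur_v g \<in># replicate_mset n2 (RHole j)" unfolding g2(2) .
    then have "ur_v g = RHole j" by (simp split: if_splits)
    then show ?thesis by (cases g) auto
  qed
  have H: "mset (w ! i) = mset (w' ! i)"
    if hh: "\<forall>i<k. length (w ! i) = (if i = j then 1 else 0)"
       "\<forall>i<k. length (w' ! i) = (if i = j then 1 else 0)" "hd (w ! j) = hd (w' ! j)" "i < k"
    for w w' :: "rval list list" and i
  proof (cases "i = j")
    case True
    have l1: "length (w ! i) = 1" "length (w' ! i) = 1" using hh(1,2,4) True by auto
    obtain a where "w ! i = [a]" using l1(1) by (cases "w ! i") auto
    moreover obtain b where "w' ! i = [b]" using l1(2) by (cases "w' ! i") auto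
    ultimately show ?thesis using hh(3) True by simp
  next
    case False
    then have "length (w ! i) = 0" "length (w' ! i) = 0" using hh(1,2,4) by auto
    then show ?thesis by simp
  qed
  show ?case unfolding g1(1) g2(1)
  proof (rule bag_case[where k=k])
    show "\<forall>g\<in>set gs1. \<forall>g'\<in>set gs2. \<forall>w w'. length w = k \<longrightarrow> length w' = k \<longrightarrow>
       (\<forall>i<k. length (w ! i) = gv_deg i g) \<longrightarrow> (\<forall>i<k. length (w' ! i) = gv_deg i g') \<longrightarrow>
       fill_v g w = fill_v g' w' \<longrightarrow> ur_v g = ur_v g' \<and> (\<forall>i<k. mset (w ! i) = mset (w' ! i))"
    proof (intro ballI allI impI)
      fix g g' w w' assume a: "g \<in> set gs1" "g' \<in> set gs2" "length w = k" "length w' = k"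
        "\<forall>i<k. length (w ! i) = gv_deg i g" "\<forall>i<k. length (w' ! i) = gv_deg i g'"
        "fill_v g w = fill_v g' w'"
      have "g = GHole j" "g' = GHole j" using s1 s2 a by auto
      moreover have "\<forall>i<k. mset (w ! i) = mset (w' ! i)"
        using H[of w w'] a \<open>g = GHole j\<close> \<open>g' = GHole j\<close> by simp
      ultimately show "ur_v g = ur_v g' \<and> (\<forall>i<k. mset (w ! i) = mset (w' ! i))" by simp
    qed
  qed (use LHole.prems[unfolded g1(1) g2(1)] in auto)
next
  case (LLam M)
  obtain ss1 where "ur_s g1 = RBag (mset (map RLam ss1))" "set ss1 \<subseteq> taylor M"
    using LLam.prems(1) by auto
  then obtain gs1 where g1: "g1 = GList gs1" "mset (map ur_v gs1) = mset (map RLam ss1)"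
    "set ss1 \<subseteq> taylor M"
    using ur_s_bag by metis
  obtain ss2 where "ur_s g2 = RBag (mset (map RLam ss2))" "set ss2 \<subseteq> taylor M"
    using LLam.prems(2) by auto
  then obtain gs2 where g2: "g2 = GList gs2" "mset (map ur_v gs2) = mset (map RLam ss2)"
    "set ss2 \<subseteq> taylor M"
    using ur_s_bag by metis
  have s1: "\<exists>h. g = GLam h \<and> ur_s h \<in> taylor M" if "g \<in> set gs1" for g
  proof -
    have "ur_v g \<in># mset (map RLam ss1)" using that g1(2) by (metis in_multiset_in_set list.set_map imageI set_mset_mset)
    then show ?thesis using g1(3) by (cases g) auto
  qed
  have s2: "\<exists>h. g = GLam h \<and> ur_s h \<in> taylor M" if "g \<in> set gs2" for g
  proof -
    have "ur_v g \<in># mset (map RLam ss2)" using that g2(2) by (metis in_multiset_in_set list.set_map imageI set_mset_mset)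
    then show ?thesis using g2(3) by (cases g) auto
  qed
  show ?case unfolding g1(1) g2(1)
  proof (rule bag_case[where k=k])
    show "\<forall>g\<in>set gs1. \<forall>g'\<in>set gs2. \<forall>w w'. length w = k \<longrightarrow> length w' = k \<longrightarrow>
       (\<forall>i<k. length (w ! i) = gv_deg i g) \<longrightarrow> (\<forall>i<k. length (w' ! i) = gv_deg i g') \<longrightarrow>
       fill_v g w = fill_v g' w' \<longrightarrow> ur_v g = ur_v g' \<and> (\<forall>i<k. mset (w ! i) = mset (w' ! i))"
    proof (intro ballI allI impI)
      fix g g' w w' assume a: "g \<in> set gs1" "g' \<in> set gs2" "length w = k" "length w' = k"
        "\<forall>i<k. length (w ! i) = gv_deg i g" "\<forall>i<k. length (w' ! i) = gv_deg i g'"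
        "fill_v g w = fill_v g' w'"
      obtain h where h: "g = GLam h" "ur_s h \<in> taylor M" using s1 a(1) by blast
      obtain h' where h': "g' = GLam h'" "ur_s h' \<in> taylor M" using s2 a(2) by blast
      have "ur_s h = ur_s h' \<and> (\<forall>i<k. mset (w ! i) = mset (w' ! i))"
        using a h h' by (intro LLam.IH) auto
      then show "ur_v g = ur_v g' \<and> (\<forall>i<k. mset (w ! i) = mset (w' ! i))" using h h' by simp
    qed
  qed (use LLam.prems(3-7)[unfolded g1(1) g2(1)] in auto)
next
  case (LApp M N)
  obtain s1 t1 where st1: "ur_s g1 = RApp s1 t1" "s1 \<in> taylor M" "t1 \<in> taylor N"
    using LApp.prems(1) by auto
  then obtain a1 b1 where g1: "g1 = GApp a1 b1" "ur_s a1 \<in> taylor M" "ur_s b1 \<in> taylor N"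
    by (cases g1) auto
  obtain s2 t2 where st2: "ur_s g2 = RApp s2 t2" "s2 \<in> taylor M" "t2 \<in> taylor N"
    using LApp.prems(2) by auto
  then obtain a2 b2 where g2: "g2 = GApp a2 b2" "ur_s a2 \<in> taylor M" "ur_s b2 \<in> taylor N"
    by (cases g2) auto
  let ?d1 = "\<lambda>i. gs_deg i a1" and ?d2 = "\<lambda>i. gs_deg i a2"
  have e1: "fill_s a1 (take_all ?d1 vs) = fill_s a2 (take_all ?d2 us)"
   and e2: "fill_s b1 (drop_all ?d1 vs) = fill_s b2 (drop_all ?d2 us)"
    using LApp.prems(7) g1 g2 by auto
  have r1: "ur_s a1 = ur_s a2 \<and> (\<forall>i<k. mset (take_all ?d1 vs ! i) = mset (take_all ?d2 us ! i))"
    using LApp.prems(3-6) g1 g2 by (intro LApp.IH(1)[OF _ _ _ _ _ _ e1]) auto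
  have r2: "ur_s b1 = ur_s b2 \<and> (\<forall>i<k. mset (drop_all ?d1 vs ! i) = mset (drop_all ?d2 us ! i))"
    using LApp.prems(3-6) g1 g2 by (intro LApp.IH(2)[OF _ _ _ _ _ _ e2]) auto
  have "mset (vs ! i) = mset (us ! i)" if "i < k" for i
  proof -
    have "mset (vs ! i) = mset (take (?d1 i) (vs ! i)) + mset (drop (?d1 i) (vs ! i))"
      by (metis append_take_drop_id mset_append)
    also have "\<dots> = mset (take (?d2 i) (us ! i)) + mset (drop (?d2 i) (us ! i))"
      using r1 r2 that LApp.prems(3,4) by auto
    also have "\<dots> = mset (us ! i)" by (metis append_take_drop_id mset_append)
    finally show ?thesis .
  qed
  then show ?case using r1 r2 g1 g2 by simp
qed

theorem mainTheorem1:
  fixes C :: lctx and k :: nat and c1 c2 :: rsim and g1 g2 :: gsim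
    and vs us :: "rval list list"
  assumes "lholes C \<subseteq> {..<k}"
    and "c1 \<in> taylor C" and "c2 \<in> taylor C"
    and "rigid_s g1 c1" and "rigid_s g2 c2"
    and "length vs = k" and "length us = k"
    and "\<forall>i<k. length (vs ! i) = deg i c1 \<and> (\<forall>v\<in>set (vs ! i). resource_value v)"
    and "\<forall>i<k. length (us ! i) = deg i c2 \<and> (\<forall>u\<in>set (us ! i). resource_value u)"
    and "fill_s g1 vs = fill_s g2 us"
  shows "c1 = c2 \<and> (\<forall>i<k. mset (vs ! i) = mset (us ! i))"
proof -
  have c: "c1 = ur_s g1" "c2 = ur_s g2" using assms(4,5) rigid_ur by auto
  show ?thesis
    using main[of g1 C g2 vs k us] assms c deg_eq[OF assms(4)] deg_eq[OF assms(5)] by auto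
qed

end
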